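(* Let $R$ be a semi-local ring containing $\mathbb Q$ and let $m\ge1$. For every $n\ge0$ the map $$\theta^n_{R_m}\colon tR_m\otimes_R\Omega^n_R\to\frac{\widetilde\Omega^n_{R_m}}{d\,\widetilde\Omega^{n-1}_{R_m}},\qquad t^i\otimes\omega\mapsto\text{class of }t^i\omega,$$ is surjective.
   Context: $R_m=R[t]/(t^{m+1})$, $tR_m$ the ideal generated by $t$. $\Omega^n_A$ denotes absolute Kähler differentials ($=\Omega^n_{A/\mathbb Q}$), $\widetilde\Omega^n_{R_m}=\ker(\Omega^n_{R_m}\to\Omega^n_R)$ (induced by $t\mapsto0$), with $\widetilde\Omega^{-1}_{R_m}=0$. *)

theory Defs
  imports "HOL-Algebra.Algebra" "HOL-Library.Poly_Mapping"
begin

definition contains_rationals :: "('a, 'b) ring_scheme \<Rightarrow> bool" where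
  "contains_rationals R \<longleftrightarrow> (\<forall>k::nat. k > 0 \<longrightarrow> ([k] \<cdot>\<^bsub>R\<^esub> \<one>\<^bsub>R\<^esub>) \<in> Units R)"

definition semilocal :: "('a, 'b) ring_scheme \<Rightarrow> bool" where
  "semilocal R \<longleftrightarrow> finite {I. maximalideal I R}"

section \<open>The truncated polynomial ring R_m = R[t]/(t^(m+1))\<close>

definition trunc_ring :: "('a, 'b) ring_scheme \<Rightarrow> nat \<Rightarrow> (nat \<Rightarrow> 'a) ring" where
  "trunc_ring R m =
    \<lparr>partial_object.carrier = {f. (\<forall>i. f i \<in> carrier R) \<and> (\<forall>i. m < i \<longrightarrow> f i = \<zero>\<^bsub>R\<^esub>)},
      monoid.mult = (\<lambda>f g. (\<lambda>k. if k \<le> m then (\<Oplus>\<^bsub>R\<^esub> i\<in>{..k}. f i \<otimes>\<^bsub>R\<^esub> g (k - i)) else \<zero>\<^bsub>R\<^esub>)),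
      monoid.one = (\<lambda>k. if k = 0 then \<one>\<^bsub>R\<^esub> else \<zero>\<^bsub>R\<^esub>),
      ring.zero = (\<lambda>k. \<zero>\<^bsub>R\<^esub>),
      ring.add = (\<lambda>f g. (\<lambda>k. f k \<oplus>\<^bsub>R\<^esub> g k))\<rparr>"

definition trunc_incl :: "('a, 'b) ring_scheme \<Rightarrow> 'a \<Rightarrow> (nat \<Rightarrow> 'a)" where
  "trunc_incl R a = (\<lambda>k. if k = 0 then a else \<zero>\<^bsub>R\<^esub>)"

definition trunc_eval0 :: "(nat \<Rightarrow> 'a) \<Rightarrow> 'a" where
  "trunc_eval0 f = f 0"

definition trunc_tpow :: "('a, 'b) ring_scheme \<Rightarrow> nat \<Rightarrow> (nat \<Rightarrow> 'a)" where
  "trunc_tpow R i = (\<lambda>k. if k = i then \<one>\<^bsub>R\<^esub> else \<zero>\<^bsub>R\<^esub>)"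

text \<open>A formal Z-linear combination of symbols a0 da1 ... dan is a finitely
  supported function from (a0,[a1,...,an]) to int.\<close>
type_synonym 'a kformal = "('a \<times> 'a list) \<Rightarrow>\<^sub>0 int"

definition kgen :: "'a \<Rightarrow> 'a list \<Rightarrow> 'a kformal" where
  "kgen a as = Poly_Mapping.single (a, as) 1"

definition kform :: "('a, 'b) ring_scheme \<Rightarrow> nat \<Rightarrow> 'a kformal set" where
  "kform A n = {x. \<forall>k \<in> Poly_Mapping.keys x.
      fst k \<in> carrier A \<and> set (snd k) \<subseteq> carrier A \<and> length (snd k) = n}"

text \<open>The quotient of the free
  abelian group by this subgroup is the exterior power
  Lambda^n_A Omega^1_{A/Z} = Omega^n_A.\<close>
inductive_set krel :: "('a, 'b) ring_scheme \<Rightarrow> nat \<Rightarrow> 'a kformal set"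
  for A n where
  zero: "0 \<in> krel A n"
| diff: "x \<in> krel A n \<Longrightarrow> y \<in> krel A n \<Longrightarrow> x - y \<in> krel A n"
| add0: "a \<in> carrier A \<Longrightarrow> b \<in> carrier A \<Longrightarrow> set as \<subseteq> carrier A \<Longrightarrow> length as = n \<Longrightarrow>
     kgen (a \<oplus>\<^bsub>A\<^esub> b) as - kgen a as - kgen b as \<in> krel A n"
| addd: "a \<in> carrier A \<Longrightarrow> b \<in> carrier A \<Longrightarrow> c \<in> carrier A \<Longrightarrow>
     set xs \<subseteq> carrier A \<Longrightarrow> set ys \<subseteq> carrier A \<Longrightarrow> length xs + length ys + 1 = n \<Longrightarrow>
     kgen a (xs @ (b \<oplus>\<^bsub>A\<^esub> c) # ys) - kgen a (xs @ b # ys) - kgen a (xs @ c # ys) \<in> krel A n"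
| leibniz: "a \<in> carrier A \<Longrightarrow> b \<in> carrier A \<Longrightarrow> c \<in> carrier A \<Longrightarrow>
     set xs \<subseteq> carrier A \<Longrightarrow> set ys \<subseteq> carrier A \<Longrightarrow> length xs + length ys + 1 = n \<Longrightarrow>
     kgen a (xs @ (b \<otimes>\<^bsub>A\<^esub> c) # ys) - kgen (a \<otimes>\<^bsub>A\<^esub> b) (xs @ c # ys)
       - kgen (a \<otimes>\<^bsub>A\<^esub> c) (xs @ b # ys) \<in> krel A n"
| alt: "a \<in> carrier A \<Longrightarrow> b \<in> carrier A \<Longrightarrow>
     set xs \<subseteq> carrier A \<Longrightarrow> set ys \<subseteq> carrier A \<Longrightarrow> set zs \<subseteq> carrier A \<Longrightarrow>
     length xs + length ys + length zs + 2 = n \<Longrightarrow>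
     kgen a (xs @ b # ys @ b # zs) \<in> krel A n"

definition keq :: "('a, 'b) ring_scheme \<Rightarrow> nat \<Rightarrow> 'a kformal \<Rightarrow> 'a kformal \<Rightarrow> bool" where
  "keq A n x y \<longleftrightarrow> x - y \<in> krel A n"

definition kmap :: "('a \<Rightarrow> 'c) \<Rightarrow> 'a kformal \<Rightarrow> 'c kformal" where
  "kmap f x = (\<Sum>k\<in>Poly_Mapping.keys x.
      Poly_Mapping.single (f (fst k), map f (snd k)) (Poly_Mapping.lookup x k))"

definition kd :: "('a, 'b) ring_scheme \<Rightarrow> 'a kformal \<Rightarrow> 'a kformal" where
  "kd A x = (\<Sum>k\<in>Poly_Mapping.keys x.
      Poly_Mapping.single (\<one>\<^bsub>A\<^esub>, fst k # snd k) (Poly_Mapping.lookup x k))"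

definition kscale :: "('a, 'b) ring_scheme \<Rightarrow> 'a \<Rightarrow> 'a kformal \<Rightarrow> 'a kformal" where
  "kscale A c x = (\<Sum>k\<in>Poly_Mapping.keys x.
      Poly_Mapping.single (c \<otimes>\<^bsub>A\<^esub> fst k, snd k) (Poly_Mapping.lookup x k))"

end

theory Submission
  imports Defs
begin


lemma lift_eq: "(\<Sum>k\<in>Poly_Mapping.keys x. Poly_Mapping.single (g k) (Poly_Mapping.lookup x k)) = frag_extend (\<lambda>k. frag_of (g k)) x"
  unfolding frag_extend_def
  by (intro sum.cong refl poly_mapping_eqI) (simp add: lookup_single when_def)

lemma kmap_fe: "kmap f x = frag_extend (\<lambda>k. frag_of (f (fst k), map f (snd k))) x"
  unfolding kmap_def by (rule lift_eq)
lemma kd_fe: "kd A x = frag_extend (\<lambda>k. frag_of (\<one>\<^bsub>A\<^esub>, fst k # snd k)) x"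
  unfolding kd_def by (rule lift_eq)
lemma kscale_fe: "kscale A c x = frag_extend (\<lambda>k. frag_of (c \<otimes>\<^bsub>A\<^esub> fst k, snd k)) x"
  unfolding kscale_def by (rule lift_eq)

lemma kmap_add: "kmap f (x + y) = kmap f x + kmap f y"
  by (simp add: kmap_fe frag_extend_add)
lemma kmap_diff: "kmap f (x - y) = kmap f x - kmap f y"
  by (simp add: kmap_fe frag_extend_diff)
lemma kmap_minus: "kmap f (- x) = - kmap f x"
  by (simp add: kmap_fe frag_extend_minus)
lemma kmap_0[simp]: "kmap f 0 = 0"
  by (simp add: kmap_fe)
lemma kmap_kgen[simp]: "kmap f (kgen a as) = kgen (f a) (map f as)"
  by (simp add: kmap_fe kgen_def)
lemma kmap_sum: "finite I \<Longrightarrow> kmap f (\<Sum>i\<in>I. g i) = (\<Sum>i\<in>I. kmap f (g i))"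
  by (simp add: kmap_fe frag_extend_sum o_def)

lemma kd_add: "kd A (x + y) = kd A x + kd A y"
  by (simp add: kd_fe frag_extend_add)
lemma kd_minus: "kd A (- x) = - kd A x"
  by (simp add: kd_fe frag_extend_minus)
lemma kd_0[simp]: "kd A 0 = 0"
  by (simp add: kd_fe)
lemma kd_kgen[simp]: "kd A (kgen a as) = kgen \<one>\<^bsub>A\<^esub> (a # as)"
  by (simp add: kd_fe kgen_def)

lemma kscale_add: "kscale A c (x + y) = kscale A c x + kscale A c y"
  by (simp add: kscale_fe frag_extend_add)
lemma kscale_minus: "kscale A c (- x) = - kscale A c x"
  by (simp add: kscale_fe frag_extend_minus)
lemma kscale_0[simp]: "kscale A c 0 = 0"
  by (simp add: kscale_fe)
lemma kscale_kgen[simp]: "kscale A c (kgen a as) = kgen (c \<otimes>\<^bsub>A\<^esub> a) as"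
  by (simp add: kscale_fe kgen_def)

lemma kgen_keys: "Poly_Mapping.keys (kgen a as) = {(a, as)}"
  by (simp add: kgen_def)

lemma kform_iff: "x \<in> kform A n \<longleftrightarrow> Poly_Mapping.keys x \<subseteq> {k. fst k \<in> carrier A \<and> set (snd k) \<subseteq> carrier A \<and> length (snd k) = n}"
  unfolding kform_def by auto
lemma kform_add: "x \<in> kform A n \<Longrightarrow> y \<in> kform A n \<Longrightarrow> x + y \<in> kform A n"
  unfolding kform_iff using keys_add[of x y] by (meson le_sup_iff order_trans)
lemma kform_minus: "x \<in> kform A n \<Longrightarrow> - x \<in> kform A n"
  unfolding kform_iff by (simp)
lemma kform_0[simp]: "0 \<in> kform A n"
  unfolding kform_iff by simp
lemma kform_kgen: "a \<in> carrier A \<Longrightarrow> set as \<subseteq> carrier A \<Longrightarrow> length as = n \<Longrightarrow> kgen a as \<in> kform A n"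
  unfolding kform_iff by (simp add: kgen_keys)

lemma krel_minus: "x \<in> krel A n \<Longrightarrow> - x \<in> krel A n"
  using krel.diff[OF krel.zero, of x] by simp
lemma krel_add: "x \<in> krel A n \<Longrightarrow> y \<in> krel A n \<Longrightarrow> x + y \<in> krel A n"
proof -
  assume "x \<in> krel A n" "y \<in> krel A n"
  then have "x - (- y) \<in> krel A n" by (intro krel.diff krel_minus)
  then show ?thesis by simp
qed
lemma krel_sum: "finite I \<Longrightarrow> (\<And>i. i \<in> I \<Longrightarrow> g i \<in> krel A n) \<Longrightarrow> (\<Sum>i\<in>I. g i) \<in> krel A n"
  by (induction I rule: finite_induct) (auto intro: krel_add krel.zero)

lemma keq_refl: "keq A n x x" by (simp add: keq_def krel.zero)
lemma keq_sym: "keq A n x y \<Longrightarrow> keq A n y x"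
  unfolding keq_def using krel_minus[of "x - y"] by simp
lemma keq_trans: "keq A n x y \<Longrightarrow> keq A n y z \<Longrightarrow> keq A n x z"
  unfolding keq_def using krel_add[of "x - y" A n "y - z"] by simp
lemma keq_add: "keq A n a b \<Longrightarrow> keq A n c d \<Longrightarrow> keq A n (a + c) (b + d)"
  unfolding keq_def using krel_add[of "a - b" A n "c - d"] by (simp add: algebra_simps)
lemma keq_minus: "keq A n a b \<Longrightarrow> keq A n (- a) (- b)"
  unfolding keq_def using krel_minus[of "a - b"] by (simp add: algebra_simps)
lemma keq_diff: "keq A n a b \<Longrightarrow> keq A n c d \<Longrightarrow> keq A n (a - c) (b - d)"
  using keq_add[of A n a b "- c" "- d"] keq_minus[of A n c d] by simp
lemma keq_krel: "x \<in> krel A n \<Longrightarrow> keq A n x 0"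
  by (simp add: keq_def)
lemma keq_krel_iff: "keq A n x 0 \<longleftrightarrow> x \<in> krel A n"
  by (simp add: keq_def)
lemma kgen_zero_coef:
  assumes "\<zero>\<^bsub>A\<^esub> \<in> carrier A" "\<zero>\<^bsub>A\<^esub> \<oplus>\<^bsub>A\<^esub> \<zero>\<^bsub>A\<^esub> = \<zero>\<^bsub>A\<^esub>" "set as \<subseteq> carrier A" "length as = n"
  shows "kgen \<zero>\<^bsub>A\<^esub> as \<in> krel A n"
proof -
  have "kgen (\<zero>\<^bsub>A\<^esub> \<oplus>\<^bsub>A\<^esub> \<zero>\<^bsub>A\<^esub>) as - kgen \<zero>\<^bsub>A\<^esub> as - kgen \<zero>\<^bsub>A\<^esub> as \<in> krel A n"
    using assms by (intro krel.add0) auto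
  then show ?thesis using assms(2) krel_minus by fastforce
qed

lemma kgen_zero_slot:
  assumes "\<zero>\<^bsub>A\<^esub> \<in> carrier A" "\<zero>\<^bsub>A\<^esub> \<oplus>\<^bsub>A\<^esub> \<zero>\<^bsub>A\<^esub> = \<zero>\<^bsub>A\<^esub>" "a \<in> carrier A"
    "set xs \<subseteq> carrier A" "set ys \<subseteq> carrier A" "length xs + length ys + 1 = n"
  shows "kgen a (xs @ \<zero>\<^bsub>A\<^esub> # ys) \<in> krel A n"
proof -
  have "kgen a (xs @ (\<zero>\<^bsub>A\<^esub> \<oplus>\<^bsub>A\<^esub> \<zero>\<^bsub>A\<^esub>) # ys) - kgen a (xs @ \<zero>\<^bsub>A\<^esub> # ys) - kgen a (xs @ \<zero>\<^bsub>A\<^esub> # ys) \<in> krel A n"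
    using assms by (intro krel.addd) auto
  then show ?thesis using assms(2) krel_minus by fastforce
qed

lemma keq_add0:
  assumes "a \<in> carrier A" "b \<in> carrier A" "set as \<subseteq> carrier A" "length as = n"
  shows "keq A n (kgen (a \<oplus>\<^bsub>A\<^esub> b) as) (kgen a as + kgen b as)"
  using krel.add0[OF assms] unfolding keq_def by (simp add: diff_diff_eq)

lemma keq_addd:
  assumes "a \<in> carrier A" "b \<in> carrier A" "c \<in> carrier A"
     "set xs \<subseteq> carrier A" "set ys \<subseteq> carrier A" "length xs + length ys + 1 = n"
  shows "keq A n (kgen a (xs @ (b \<oplus>\<^bsub>A\<^esub> c) # ys)) (kgen a (xs @ b # ys) + kgen a (xs @ c # ys))"
  using krel.addd[OF assms] unfolding keq_def by (simp add: diff_diff_eq)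

lemma keq_leibniz:
  assumes "a \<in> carrier A" "b \<in> carrier A" "c \<in> carrier A"
     "set xs \<subseteq> carrier A" "set ys \<subseteq> carrier A" "length xs + length ys + 1 = n"
  shows "keq A n (kgen a (xs @ (b \<otimes>\<^bsub>A\<^esub> c) # ys)) (kgen (a \<otimes>\<^bsub>A\<^esub> b) (xs @ c # ys) + kgen (a \<otimes>\<^bsub>A\<^esub> c) (xs @ b # ys))"
  using krel.leibniz[OF assms] unfolding keq_def by (simp add: diff_diff_eq)

lemma kgen_swap:
  assumes "a \<in> carrier A" "b \<in> carrier A" "c \<in> carrier A" "b \<oplus>\<^bsub>A\<^esub> c \<in> carrier A"
     "set xs \<subseteq> carrier A" "set ys \<subseteq> carrier A" "length xs + length ys + 2 = n"
  shows "keq A n (kgen a (xs @ b # c # ys)) (- kgen a (xs @ c # b # ys))"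
proof -
  let ?s = "b \<oplus>\<^bsub>A\<^esub> c"
  have 0: "kgen a (xs @ ?s # ?s # ys) \<in> krel A n"
    using assms krel.alt[of a A ?s xs "[]" ys n] by auto
  have 1: "kgen a (xs @ b # b # ys) \<in> krel A n" "kgen a (xs @ c # c # ys) \<in> krel A n"
    using assms krel.alt[of a A b xs "[]" ys n] krel.alt[of a A c xs "[]" ys n] by auto
  have e1: "keq A n (kgen a (xs @ ?s # ?s # ys)) (kgen a (xs @ b # ?s # ys) + kgen a (xs @ c # ?s # ys))"
    using assms by (intro keq_addd) auto
  have e2: "keq A n (kgen a (xs @ b # ?s # ys)) (kgen a (xs @ b # b # ys) + kgen a (xs @ b # c # ys))"
    using assms keq_addd[of a A b c "xs @ [b]" ys n] by auto
  have e3: "keq A n (kgen a (xs @ c # ?s # ys)) (kgen a (xs @ c # b # ys) + kgen a (xs @ c # c # ys))"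
    using assms keq_addd[of a A b c "xs @ [c]" ys n] by auto
  have "keq A n 0 (kgen a (xs @ b # b # ys) + kgen a (xs @ b # c # ys) + (kgen a (xs @ c # b # ys) + kgen a (xs @ c # c # ys)))"
    using keq_trans[OF keq_sym[OF keq_krel[OF 0]] keq_trans[OF e1 keq_add[OF e2 e3]]] by simp
  moreover have "keq A n (kgen a (xs @ b # b # ys) + kgen a (xs @ b # c # ys) + (kgen a (xs @ c # b # ys) + kgen a (xs @ c # c # ys)))
     (0 + kgen a (xs @ b # c # ys) + (kgen a (xs @ c # b # ys) + 0))"
    using 1 by (intro keq_add keq_refl keq_krel) auto
  ultimately have "keq A n (kgen a (xs @ b # c # ys) + kgen a (xs @ c # b # ys)) 0"
    using keq_sym keq_trans by fastforce
  then have "kgen a (xs @ b # c # ys) + kgen a (xs @ c # b # ys) \<in> krel A n"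
    unfolding keq_def using krel_minus by force
  then show ?thesis unfolding keq_def by (simp add: diff_minus_eq_add)
qed


definition sg :: "nat \<Rightarrow> 'c kformal \<Rightarrow> 'c kformal" where
  "sg k z = (if even k then z else - z)"

lemma kgen_front_gen:
  assumes cl: "\<And>x y. x \<in> carrier A \<Longrightarrow> y \<in> carrier A \<Longrightarrow> x \<oplus>\<^bsub>A\<^esub> y \<in> carrier A"
    and "a \<in> carrier A" "b \<in> carrier A" "set pre \<subseteq> carrier A" "set xs \<subseteq> carrier A" "set ys \<subseteq> carrier A"
    "length pre + length xs + length ys + 1 = n"
  shows "keq A n (kgen a (pre @ xs @ b # ys)) (sg (length xs) (kgen a (pre @ b # xs @ ys)))"
  using assms(4-7)
proof (induction xs arbitrary: pre)
  case Nil
  then show ?case by (simp add: sg_def keq_refl)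
next
  case (Cons x xs)
  have ih: "keq A n (kgen a ((pre @ [x]) @ xs @ b # ys)) (sg (length xs) (kgen a ((pre @ [x]) @ b # xs @ ys)))"
    using Cons by (intro Cons.IH) auto
  have sw: "keq A n (kgen a (pre @ x # b # (xs @ ys))) (- kgen a (pre @ b # x # (xs @ ys)))"
    using Cons assms(2,3) cl by (intro kgen_swap) auto
  have "keq A n (sg (length xs) (kgen a (pre @ x # b # (xs @ ys)))) (sg (length xs) (- kgen a (pre @ b # x # (xs @ ys))))"
    using sw keq_minus[OF sw] unfolding sg_def by auto
  with ih show ?case unfolding sg_def by (auto elim: keq_trans)
qed

lemma kgen_front:
  assumes cl: "\<And>x y. x \<in> carrier A \<Longrightarrow> y \<in> carrier A \<Longrightarrow> x \<oplus>\<^bsub>A\<^esub> y \<in> carrier A"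
    and "a \<in> carrier A" "b \<in> carrier A" "set xs \<subseteq> carrier A" "set ys \<subseteq> carrier A"
    "length xs + length ys + 1 = n"
  shows "keq A n (kgen a (xs @ b # ys)) (sg (length xs) (kgen a (b # xs @ ys)))"
  using kgen_front_gen[OF assms(1-3), of "[]" xs ys n] assms by simp

lemma kmap_krel:
  assumes fc: "\<And>x. x \<in> carrier A \<Longrightarrow> f x \<in> carrier B"
    and fa: "\<And>x y. x \<in> carrier A \<Longrightarrow> y \<in> carrier A \<Longrightarrow> f (x \<oplus>\<^bsub>A\<^esub> y) = f x \<oplus>\<^bsub>B\<^esub> f y"
    and fm: "\<And>x y. x \<in> carrier A \<Longrightarrow> y \<in> carrier A \<Longrightarrow> f (x \<otimes>\<^bsub>A\<^esub> y) = f x \<otimes>\<^bsub>B\<^esub> f y"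
    and x: "x \<in> krel A n"
  shows "kmap f x \<in> krel B n"
  using x
proof induction
  case zero
  then show ?case by (simp add: krel.zero)
next
  case (diff x y)
  then show ?case by (simp add: kmap_diff krel.diff)
next
  case (add0 a b as)
  have "kgen (f a \<oplus>\<^bsub>B\<^esub> f b) (map f as) - kgen (f a) (map f as) - kgen (f b) (map f as) \<in> krel B n"
    using add0 fc by (intro krel.add0) auto
  then show ?case using add0 by (simp add: kmap_diff fa)
next
  case (addd a b c xs ys)
  have "kgen (f a) (map f xs @ (f b \<oplus>\<^bsub>B\<^esub> f c) # map f ys) - kgen (f a) (map f xs @ f b # map f ys)
     - kgen (f a) (map f xs @ f c # map f ys) \<in> krel B n"
    using addd fc by (intro krel.addd) auto
  then show ?case using addd by (simp add: kmap_diff fa)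
next
  case (leibniz a b c xs ys)
  have "kgen (f a) (map f xs @ (f b \<otimes>\<^bsub>B\<^esub> f c) # map f ys) - kgen (f a \<otimes>\<^bsub>B\<^esub> f b) (map f xs @ f c # map f ys)
     - kgen (f a \<otimes>\<^bsub>B\<^esub> f c) (map f xs @ f b # map f ys) \<in> krel B n"
    using leibniz fc by (intro krel.leibniz) auto
  then show ?case using leibniz by (simp add: kmap_diff fm)
next
  case (alt a b xs ys zs)
  have "kgen (f a) (map f xs @ f b # map f ys @ f b # map f zs) \<in> krel B n"
    using alt fc by (intro krel.alt) auto
  then show ?case by simp
qed

lemma kmap_keq:
  assumes fc: "\<And>x. x \<in> carrier A \<Longrightarrow> f x \<in> carrier B"
    and fa: "\<And>x y. x \<in> carrier A \<Longrightarrow> y \<in> carrier A \<Longrightarrow> f (x \<oplus>\<^bsub>A\<^esub> y) = f x \<oplus>\<^bsub>B\<^esub> f y"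
    and fm: "\<And>x y. x \<in> carrier A \<Longrightarrow> y \<in> carrier A \<Longrightarrow> f (x \<otimes>\<^bsub>A\<^esub> y) = f x \<otimes>\<^bsub>B\<^esub> f y"
    and x: "keq A n x y"
  shows "keq B n (kmap f x) (kmap f y)"
  using kmap_krel[OF assms(1-3), of "x - y" n] x unfolding keq_def by (simp add: kmap_diff)



locale trc = cring + fixes m :: nat
begin

abbreviation Rm where "Rm \<equiv> trunc_ring R m"

definition tm :: "nat \<Rightarrow> 'a \<Rightarrow> nat \<Rightarrow> 'a" where
  "tm j c = (\<lambda>i. if i = j \<and> j \<le> m then c else \<zero>)"

lemma carrier_Rm: "f \<in> carrier Rm \<longleftrightarrow> (\<forall>i. f i \<in> carrier R) \<and> (\<forall>i. m < i \<longrightarrow> f i = \<zero>)"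
  by (simp add: trunc_ring_def)
lemma add_Rm: "f \<oplus>\<^bsub>Rm\<^esub> g = (\<lambda>k. f k \<oplus> g k)"
  by (simp add: trunc_ring_def)
lemma mult_Rm: "f \<otimes>\<^bsub>Rm\<^esub> g = (\<lambda>k. if k \<le> m then (\<Oplus>i\<in>{..k}. f i \<otimes> g (k - i)) else \<zero>)"
  by (simp add: trunc_ring_def)
lemma one_Rm: "\<one>\<^bsub>Rm\<^esub> = tm 0 \<one>"
  by (auto simp add: trunc_ring_def tm_def)
lemma zero_Rm: "\<zero>\<^bsub>Rm\<^esub> = (\<lambda>k. \<zero>)"
  by (simp add: trunc_ring_def)

lemma tm_carrier[simp]: "c \<in> carrier R \<Longrightarrow> tm j c \<in> carrier Rm"
  by (auto simp: carrier_Rm tm_def)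
lemma tm_add: "a \<in> carrier R \<Longrightarrow> b \<in> carrier R \<Longrightarrow> tm j a \<oplus>\<^bsub>Rm\<^esub> tm j b = tm j (a \<oplus> b)"
  by (auto simp: add_Rm tm_def)
lemma tm_zero: "tm j \<zero> = \<zero>\<^bsub>Rm\<^esub>"
  by (auto simp: zero_Rm tm_def)
lemma tm_big: "m < j \<Longrightarrow> tm j c = \<zero>\<^bsub>Rm\<^esub>"
  by (auto simp: zero_Rm tm_def)
lemma zero_Rm_carrier[simp]: "\<zero>\<^bsub>Rm\<^esub> \<in> carrier Rm"
  by (simp add: carrier_Rm zero_Rm)
lemma zero_Rm_add: "\<zero>\<^bsub>Rm\<^esub> \<oplus>\<^bsub>Rm\<^esub> \<zero>\<^bsub>Rm\<^esub> = \<zero>\<^bsub>Rm\<^esub>"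
  by (simp add: add_Rm zero_Rm)
lemma add_Rm_closed: "f \<in> carrier Rm \<Longrightarrow> g \<in> carrier Rm \<Longrightarrow> f \<oplus>\<^bsub>Rm\<^esub> g \<in> carrier Rm"
  by (auto simp: carrier_Rm add_Rm)

lemma tm_mult:
  assumes a: "a \<in> carrier R" and b: "b \<in> carrier R"
  shows "tm j a \<otimes>\<^bsub>Rm\<^esub> tm k b = tm (j + k) (a \<otimes> b)"
proof
  fix l
  show "(tm j a \<otimes>\<^bsub>Rm\<^esub> tm k b) l = tm (j + k) (a \<otimes> b) l"
  proof (cases "l \<le> m")
    case False
    then show ?thesis by (auto simp add: mult_Rm tm_def)
  next
    case True
    have "(\<Oplus>i\<in>{..l}. tm j a i \<otimes> tm k b (l - i)) =
          (\<Oplus>i\<in>{..l}. if i = j then (if l = j + k \<and> j + k \<le> m then a \<otimes> b else \<zero>) else \<zero>)"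
      using a b True by (intro finsum_cong') (auto simp: tm_def)
    also have "\<dots> = tm (j + k) (a \<otimes> b) l"
    proof (cases "j \<le> l")
      case True
      then show ?thesis using a b
        by (subst add.finprod_singleton_swap) (auto simp: tm_def)
    next
      case False
      then show ?thesis by (auto simp: tm_def intro!: finsum_zero)
    qed
    finally show ?thesis using True by (simp add: mult_Rm)
  qed
qed

lemma incl_tm: "trunc_incl R c = tm 0 c"
  by (auto simp: trunc_incl_def tm_def)
lemma tpow_tm: "i \<le> m \<Longrightarrow> trunc_tpow R i = tm i \<one>"
  by (auto simp: trunc_tpow_def tm_def)

lemma eval0_carrier: "f \<in> carrier Rm \<Longrightarrow> trunc_eval0 f \<in> carrier R"
  by (simp add: carrier_Rm trunc_eval0_def)
lemma eval0_add: "trunc_eval0 (f \<oplus>\<^bsub>Rm\<^esub> g) = trunc_eval0 f \<oplus> trunc_eval0 g"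
  by (simp add: add_Rm trunc_eval0_def)
lemma eval0_mult: "f \<in> carrier Rm \<Longrightarrow> g \<in> carrier Rm \<Longrightarrow> trunc_eval0 (f \<otimes>\<^bsub>Rm\<^esub> g) = trunc_eval0 f \<otimes> trunc_eval0 g"
  by (simp add: mult_Rm trunc_eval0_def carrier_Rm)
lemma eval0_tm: "trunc_eval0 (tm j c) = (if j = 0 then c else \<zero>)"
  by (simp add: tm_def trunc_eval0_def)

lemma incl_carrier: "c \<in> carrier R \<Longrightarrow> trunc_incl R c \<in> carrier Rm"
  by (simp add: incl_tm)
lemma incl_add: "a \<in> carrier R \<Longrightarrow> b \<in> carrier R \<Longrightarrow> trunc_incl R (a \<oplus> b) = trunc_incl R a \<oplus>\<^bsub>Rm\<^esub> trunc_incl R b"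
  by (simp add: incl_tm tm_add)
lemma incl_mult: "a \<in> carrier R \<Longrightarrow> b \<in> carrier R \<Longrightarrow> trunc_incl R (a \<otimes> b) = trunc_incl R a \<otimes>\<^bsub>Rm\<^esub> trunc_incl R b"
  by (simp add: incl_tm tm_mult)

lemma krel_eval0: "x \<in> krel Rm n \<Longrightarrow> kmap trunc_eval0 x \<in> krel R n"
  by (rule kmap_krel[where A=Rm]) (auto simp: eval0_carrier eval0_add eval0_mult)
lemma krel_incl: "x \<in> krel R n \<Longrightarrow> kmap (trunc_incl R) x \<in> krel Rm n"
  by (rule kmap_krel[where A=R]) (auto simp: incl_carrier incl_add incl_mult)

end


context trc begin

definition prt :: "nat \<Rightarrow> (nat \<Rightarrow> 'a) \<Rightarrow> nat \<Rightarrow> 'a" where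
  "prt N f = (\<lambda>i. if i < N then f i else \<zero>)"

lemma prt_0: "prt 0 f = \<zero>\<^bsub>Rm\<^esub>"
  by (simp add: prt_def zero_Rm)
lemma prt_Suc: "f \<in> carrier Rm \<Longrightarrow> N \<le> m \<Longrightarrow> prt (Suc N) f = prt N f \<oplus>\<^bsub>Rm\<^esub> tm N (f N)"
  by (auto simp: prt_def add_Rm tm_def carrier_Rm)
lemma prt_carrier: "f \<in> carrier Rm \<Longrightarrow> prt N f \<in> carrier Rm"
  by (auto simp: prt_def carrier_Rm)
lemma prt_full: "f \<in> carrier Rm \<Longrightarrow> prt (Suc m) f = f"
  by (auto simp: prt_def carrier_Rm)

lemma decomp_slot_N:
  assumes f: "f \<in> carrier Rm" and a: "a \<in> carrier Rm" and xs: "set xs \<subseteq> carrier Rm" and ys: "set ys \<subseteq> carrier Rm"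
    and len: "length xs + length ys + 1 = n"
  shows "N \<le> Suc m \<Longrightarrow> keq Rm n (kgen a (xs @ prt N f # ys)) (\<Sum>k<N. kgen a (xs @ tm k (f k) # ys))"
proof (induction N)
  case 0
  then show ?case using kgen_zero_slot[of Rm a xs ys n] assms
    by (simp add: prt_0 zero_Rm_add keq_krel)
next
  case (Suc N)
  have fN: "f N \<in> carrier R" using f by (simp add: carrier_Rm)
  have "keq Rm n (kgen a (xs @ prt (Suc N) f # ys)) (kgen a (xs @ prt N f # ys) + kgen a (xs @ tm N (f N) # ys))"
    using Suc.prems prt_Suc[OF f, of N] assms fN
    by (simp add: keq_addd prt_carrier)
  moreover have "keq Rm n (kgen a (xs @ prt N f # ys) + kgen a (xs @ tm N (f N) # ys))
     ((\<Sum>k<N. kgen a (xs @ tm k (f k) # ys)) + kgen a (xs @ tm N (f N) # ys))"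
    using Suc by (intro keq_add keq_refl) auto
  ultimately show ?case by (simp add: keq_trans)
qed

lemma decomp_slot:
  assumes f: "f \<in> carrier Rm" and a: "a \<in> carrier Rm" and xs: "set xs \<subseteq> carrier Rm" and ys: "set ys \<subseteq> carrier Rm"
    and len: "length xs + length ys + 1 = n"
  shows "keq Rm n (kgen a (xs @ f # ys)) (\<Sum>k<Suc m. kgen a (xs @ tm k (f k) # ys))"
  using decomp_slot_N[OF assms, of "Suc m"] prt_full[OF f] by simp

lemma decomp_coef_N:
  assumes f: "f \<in> carrier Rm" and as: "set as \<subseteq> carrier Rm" and len: "length as = n"
  shows "N \<le> Suc m \<Longrightarrow> keq Rm n (kgen (prt N f) as) (\<Sum>k<N. kgen (tm k (f k)) as)"
proof (induction N)
  case 0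
  then show ?case using kgen_zero_coef[of Rm as n] assms
    by (simp add: prt_0 zero_Rm_add keq_krel)
next
  case (Suc N)
  have fN: "f N \<in> carrier R" using f by (simp add: carrier_Rm)
  have "keq Rm n (kgen (prt (Suc N) f) as) (kgen (prt N f) as + kgen (tm N (f N)) as)"
    using Suc.prems prt_Suc[OF f, of N] assms fN
    by (simp add: keq_add0 prt_carrier)
  moreover have "keq Rm n (kgen (prt N f) as + kgen (tm N (f N)) as)
     ((\<Sum>k<N. kgen (tm k (f k)) as) + kgen (tm N (f N)) as)"
    using Suc by (intro keq_add keq_refl) auto
  ultimately show ?case by (simp add: keq_trans)
qed

lemma decomp_coef:
  assumes f: "f \<in> carrier Rm" and as: "set as \<subseteq> carrier Rm" and len: "length as = n"
  shows "keq Rm n (kgen f as) (\<Sum>k<Suc m. kgen (tm k (f k)) as)"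
  using decomp_coef_N[OF assms, of "Suc m"] prt_full[OF f] by simp

definition W :: "(nat \<Rightarrow> 'a kformal) \<Rightarrow> (nat \<Rightarrow> 'a) kformal" where
  "W w = (\<Sum>i\<in>{1..m}. kscale Rm (trunc_tpow R i) (kmap (trunc_incl R) (w i)))"

lemma W_add: "W (\<lambda>i. w1 i + w2 i) = W w1 + W w2"
  by (simp add: W_def kmap_add kscale_add sum.distrib)
lemma W_minus: "W (\<lambda>i. - w i) = - W w"
  by (simp add: W_def kmap_minus kscale_minus sum_negf)
lemma W_0: "W (\<lambda>i. 0) = 0"
  by (simp add: W_def)
lemma W_single: "j \<in> {1..m} \<Longrightarrow> W (\<lambda>i. if i = j then v else 0) = kscale Rm (trunc_tpow R j) (kmap (trunc_incl R) v)"
  unfolding W_def by (simp add: if_distrib[of "kmap _"] if_distrib[of "kscale _ _"] cong: if_cong)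

definition good :: "nat \<Rightarrow> (nat \<Rightarrow> 'a) kformal \<Rightarrow> bool" where
  "good n z \<longleftrightarrow> (\<exists>y w. y \<in> kform Rm (n - 1) \<and> (n = 0 \<longrightarrow> y = 0)
      \<and> keq R (n - 1) (kmap trunc_eval0 y) 0 \<and> (\<forall>i. w i \<in> kform R n)
      \<and> keq Rm n z (kmap (trunc_incl R) (kmap trunc_eval0 z) + kd Rm y + W w))"

lemma keq_eval0: "keq Rm n x y \<Longrightarrow> keq R n (kmap trunc_eval0 x) (kmap trunc_eval0 y)"
  by (rule kmap_keq[where A=Rm]) (auto simp: eval0_carrier eval0_add eval0_mult)
lemma keq_incl: "keq R n x y \<Longrightarrow> keq Rm n (kmap (trunc_incl R) x) (kmap (trunc_incl R) y)"
  by (rule kmap_keq[where A=R]) (auto simp: incl_carrier incl_add incl_mult)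

lemma good_0: "good n 0"
  unfolding good_def
  by (rule exI[of _ 0], rule exI[of _ "\<lambda>i. 0"]) (simp add: W_0 keq_refl)

lemma good_add: "good n z1 \<Longrightarrow> good n z2 \<Longrightarrow> good n (z1 + z2)"
  unfolding good_def
proof (elim exE conjE)
  fix y1 w1 y2 w2
  assume h: "y1 \<in> kform Rm (n - 1)" "n = 0 \<longrightarrow> y1 = 0" "keq R (n - 1) (kmap trunc_eval0 y1) 0"
    "\<forall>i. w1 i \<in> kform R n" "keq Rm n z1 (kmap (trunc_incl R) (kmap trunc_eval0 z1) + kd Rm y1 + W w1)"
    "y2 \<in> kform Rm (n - 1)" "n = 0 \<longrightarrow> y2 = 0" "keq R (n - 1) (kmap trunc_eval0 y2) 0"
    "\<forall>i. w2 i \<in> kform R n" "keq Rm n z2 (kmap (trunc_incl R) (kmap trunc_eval0 z2) + kd Rm y2 + W w2)"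
  show "\<exists>y w. y \<in> kform Rm (n - 1) \<and> (n = 0 \<longrightarrow> y = 0) \<and> keq R (n - 1) (kmap trunc_eval0 y) 0 \<and>
      (\<forall>i. w i \<in> kform R n) \<and> keq Rm n (z1 + z2) (kmap (trunc_incl R) (kmap trunc_eval0 (z1 + z2)) + kd Rm y + W w)"
  proof (intro exI conjI)
    show "y1 + y2 \<in> kform Rm (n - 1)" using h by (simp add: kform_add)
    show "n = 0 \<longrightarrow> y1 + y2 = 0" using h by simp
    show "keq R (n - 1) (kmap trunc_eval0 (y1 + y2)) 0"
      using keq_add[OF h(3) h(8)] by (simp add: kmap_add)
    show "\<forall>i. w1 i + w2 i \<in> kform R n" using h by (simp add: kform_add)
    show "keq Rm n (z1 + z2) (kmap (trunc_incl R) (kmap trunc_eval0 (z1 + z2)) + kd Rm (y1 + y2) + W (\<lambda>i. w1 i + w2 i))"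
      using keq_add[OF h(5) h(10)] by (simp add: kmap_add kd_add W_add algebra_simps)
  qed
qed

lemma good_minus: "good n z \<Longrightarrow> good n (- z)"
  unfolding good_def
proof (elim exE conjE)
  fix y w
  assume h: "y \<in> kform Rm (n - 1)" "n = 0 \<longrightarrow> y = 0" "keq R (n - 1) (kmap trunc_eval0 y) 0"
    "\<forall>i. w i \<in> kform R n" "keq Rm n z (kmap (trunc_incl R) (kmap trunc_eval0 z) + kd Rm y + W w)"
  show "\<exists>y w. y \<in> kform Rm (n - 1) \<and> (n = 0 \<longrightarrow> y = 0) \<and> keq R (n - 1) (kmap trunc_eval0 y) 0 \<and>
      (\<forall>i. w i \<in> kform R n) \<and> keq Rm n (- z) (kmap (trunc_incl R) (kmap trunc_eval0 (- z)) + kd Rm y + W w)"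
  proof (intro exI conjI)
    show "- y \<in> kform Rm (n - 1)" using h by (simp add: kform_minus)
    show "n = 0 \<longrightarrow> - y = 0" using h by simp
    show "keq R (n - 1) (kmap trunc_eval0 (- y)) 0"
      using keq_minus[OF h(3)] by (simp add: kmap_minus)
    show "\<forall>i. - w i \<in> kform R n" using h by (simp add: kform_minus)
    show "keq Rm n (- z) (kmap (trunc_incl R) (kmap trunc_eval0 (- z)) + kd Rm (- y) + W (\<lambda>i. - w i))"
      using keq_minus[OF h(5)] by (simp add: kmap_minus kd_minus W_minus algebra_simps)
  qed
qed

lemma good_diff: "good n z1 \<Longrightarrow> good n z2 \<Longrightarrow> good n (z1 - z2)"
  using good_add[OF _ good_minus] by (metis diff_conv_add_uminus)

lemma good_sg: "good n z \<Longrightarrow> good n (sg k z)"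
  by (simp add: sg_def good_minus)

lemma good_keq: "keq Rm n z z' \<Longrightarrow> good n z' \<Longrightarrow> good n z"
  unfolding good_def
proof (elim exE conjE)
  fix y w
  assume e: "keq Rm n z z'" and h: "y \<in> kform Rm (n - 1)" "n = 0 \<longrightarrow> y = 0" "keq R (n - 1) (kmap trunc_eval0 y) 0"
    "\<forall>i. w i \<in> kform R n" "keq Rm n z' (kmap (trunc_incl R) (kmap trunc_eval0 z') + kd Rm y + W w)"
  have "keq Rm n (kmap (trunc_incl R) (kmap trunc_eval0 z')) (kmap (trunc_incl R) (kmap trunc_eval0 z))"
    by (intro keq_incl keq_eval0 keq_sym[OF e])
  then have "keq Rm n z (kmap (trunc_incl R) (kmap trunc_eval0 z) + kd Rm y + W w)"
    using keq_trans[OF e h(5)] by (meson keq_add keq_refl keq_trans)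
  with h show "\<exists>y w. y \<in> kform Rm (n - 1) \<and> (n = 0 \<longrightarrow> y = 0) \<and> keq R (n - 1) (kmap trunc_eval0 y) 0 \<and>
      (\<forall>i. w i \<in> kform R n) \<and> keq Rm n z (kmap (trunc_incl R) (kmap trunc_eval0 z) + kd Rm y + W w)"
    by blast
qed

lemma good_krel: "z \<in> krel Rm n \<Longrightarrow> good n z"
  using good_keq[OF keq_krel good_0] .

lemma good_sum: "finite I \<Longrightarrow> (\<And>i. i \<in> I \<Longrightarrow> good n (g i)) \<Longrightarrow> good n (\<Sum>i\<in>I. g i)"
  by (induction I rule: finite_induct) (auto intro: good_add good_0)

end


context trc begin

abbreviation TT where "TT \<equiv> tm 1 \<one>"

lemma pow_Suc_Suc: "c \<in> carrier R \<Longrightarrow> [Suc (Suc k)] \<cdot> c = c \<oplus> [Suc k] \<cdot> c"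
  by (simp add: a_ac)

lemma lemD:
  assumes c: "c \<in> carrier R" and xs: "set xs \<subseteq> carrier Rm" and ys: "set ys \<subseteq> carrier Rm"
    and len: "length xs + length ys + 1 = n"
  shows "keq Rm n (kgen (tm j c) (xs @ tm (Suc k) \<one> # ys)) (kgen (tm (j + k) ([Suc k] \<cdot> c)) (xs @ TT # ys))"
  using c
proof (induction k arbitrary: j c)
  case 0
  then show ?case by (simp add: keq_refl)
next
  case (Suc k)
  have e1: "tm (Suc (Suc k)) \<one> = tm (Suc k) \<one> \<otimes>\<^bsub>Rm\<^esub> TT" by (simp add: tm_mult)
  have l: "keq Rm n (kgen (tm j c) (xs @ (tm (Suc k) \<one> \<otimes>\<^bsub>Rm\<^esub> TT) # ys))
     (kgen (tm j c \<otimes>\<^bsub>Rm\<^esub> tm (Suc k) \<one>) (xs @ TT # ys) + kgen (tm j c \<otimes>\<^bsub>Rm\<^esub> TT) (xs @ tm (Suc k) \<one> # ys))"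
    using Suc.prems xs ys len by (intro keq_leibniz) auto
  have ih: "keq Rm n (kgen (tm (j + 1) c) (xs @ tm (Suc k) \<one> # ys)) (kgen (tm (j + 1 + k) ([Suc k] \<cdot> c)) (xs @ TT # ys))"
    using Suc by blast
  have l2: "keq Rm n (kgen (tm (j + Suc k) c) (xs @ TT # ys) + kgen (tm (j + 1) c) (xs @ tm (Suc k) \<one> # ys))
     (kgen (tm (j + Suc k) c) (xs @ TT # ys) + kgen (tm (j + Suc k) ([Suc k] \<cdot> c)) (xs @ TT # ys))"
    using ih by (intro keq_add keq_refl) simp
  have l3: "keq Rm n (kgen (tm (j + Suc k) c \<oplus>\<^bsub>Rm\<^esub> tm (j + Suc k) ([Suc k] \<cdot> c)) (xs @ TT # ys))
     (kgen (tm (j + Suc k) c) (xs @ TT # ys) + kgen (tm (j + Suc k) ([Suc k] \<cdot> c)) (xs @ TT # ys))"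
    using Suc.prems xs ys len by (intro keq_add0) auto
  have e2: "tm (j + Suc k) c \<oplus>\<^bsub>Rm\<^esub> tm (j + Suc k) ([Suc k] \<cdot> c) = tm (j + Suc k) ([Suc (Suc k)] \<cdot> c)"
    using Suc.prems by (simp add: tm_add a_ac)
  have l': "keq Rm n (kgen (tm j c) (xs @ tm (Suc (Suc k)) \<one> # ys))
     (kgen (tm (j + Suc k) c) (xs @ TT # ys) + kgen (tm (j + 1) c) (xs @ tm (Suc k) \<one> # ys))"
    using l Suc.prems by (simp add: tm_mult)
  show ?case
    using keq_trans[OF keq_trans[OF l' l2] keq_sym[OF l3]] Suc.prems
    by (simp add: tm_add a_ac)
qed


lemma good_intro:
  assumes "0 < n" "y \<in> kform Rm (n - 1)" "kmap trunc_eval0 y \<in> krel R (n - 1)"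
    "\<And>i. w i \<in> kform R n" "kmap (trunc_incl R) (kmap trunc_eval0 z) \<in> krel Rm n"
    "keq Rm n z (kd Rm y + W w)"
  shows "good n z"
  unfolding good_def
proof (intro exI conjI)
  show "y \<in> kform Rm (n - 1)" "n = 0 \<longrightarrow> y = 0" "keq R (n - 1) (kmap trunc_eval0 y) 0" "\<forall>i. w i \<in> kform R n"
    using assms by (auto simp: keq_krel)
  have "keq Rm n (kd Rm y + W w) (kmap (trunc_incl R) (kmap trunc_eval0 z) + kd Rm y + W w)"
    using keq_add[OF keq_sym[OF keq_krel[OF assms(5)]] keq_refl[of Rm n "kd Rm y + W w"]]
    by (simp add: add.assoc)
  then show "keq Rm n z (kmap (trunc_incl R) (kmap trunc_eval0 z) + kd Rm y + W w)"
    using assms(6) keq_trans by blast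
qed

lemma incl_tm_fun: "trunc_incl R = tm 0"
  using incl_tm by blast

lemma mono_carrier: "set es \<subseteq> carrier R \<Longrightarrow> set (map (tm j) es) \<subseteq> carrier Rm"
  by auto

lemma lemH:
  assumes cr: "contains_rationals R" and c: "c \<in> carrier R" and es: "set es \<subseteq> carrier R"
    and len: "length es + 1 = n"
  shows "good n (kgen (tm j c) (TT # map (tm 0) es))"
proof -
  define u where "u = inv ([Suc j] \<cdot> \<one>)"
  have uU: "[Suc j] \<cdot> \<one> \<in> Units R" using cr by (simp add: contains_rationals_def del: add.nat_pow_Suc)
  have u: "u \<in> carrier R" unfolding u_def using uU by simp
  have uc: "[Suc j] \<cdot> (u \<otimes> c) = c"
  proof -
    have "[Suc j] \<cdot> (u \<otimes> c) = [Suc j] \<cdot> ((\<one> \<otimes> u) \<otimes> c)" using u by simp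
    also have "\<dots> = (([Suc j] \<cdot> \<one>) \<otimes> u) \<otimes> c"
      using u c by (simp add: add_pow_ldistr del: add.nat_pow_Suc)
    also have "\<dots> = c" unfolding u_def using uU c by simp
    finally show ?thesis .
  qed
  define ys where "ys = map (tm 0) es"
  have ys: "set ys \<subseteq> carrier Rm" using es by (auto simp: ys_def)
  define y where "y = kgen (tm (Suc j) (u \<otimes> c)) ys"
  define v where "v = kgen (tm (Suc j) \<one>) (tm 0 (u \<otimes> c) # ys)"
  define z where "z = kgen (tm j c) (TT # ys)"
  have kdy: "kd Rm y = kgen (tm 0 \<one>) (tm 0 (u \<otimes> c) \<otimes>\<^bsub>Rm\<^esub> tm (Suc j) \<one> # ys)"
    using u c by (simp add: y_def one_Rm tm_mult)
  have l1: "keq Rm n (kd Rm y) (kgen (tm 0 (u \<otimes> c)) (tm (Suc j) \<one> # ys) + v)"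
    using keq_leibniz[of "tm 0 \<one>" Rm "tm 0 (u \<otimes> c)" "tm (Suc j) \<one>" "[]" ys n] u c ys len
    by (simp add: kdy v_def tm_mult ys_def)
  have l2: "keq Rm n (kgen (tm 0 (u \<otimes> c)) (tm (Suc j) \<one> # ys)) z"
    using lemD[of "u \<otimes> c" "[]" ys n 0 j] u c ys len uc by (simp add: z_def ys_def)
  have zz: "keq Rm n z (kd Rm y + (- v))"
    using keq_trans[OF keq_sym[OF l2], of "kd Rm y - v"] keq_diff[OF l1 keq_refl[of Rm n v]]
    by (simp add: keq_sym)
  show ?thesis unfolding z_def[symmetric] ys_def[symmetric]
  proof (cases "Suc j \<le> m")
    case True
    define w where "w = (\<lambda>i. if i = Suc j then - kgen \<one> ((u \<otimes> c) # es) else 0)"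
    have Ww: "W w = - v"
      unfolding w_def using W_single[of "Suc j" "- kgen \<one> ((u \<otimes> c) # es)"] True u c
      by (simp add: kmap_minus kscale_minus v_def ys_def incl_tm_fun tpow_tm tm_mult o_def)
    show "good n z"
    proof (rule good_intro[where y=y and w=w])
      show "0 < n" using len by simp
      show "y \<in> kform Rm (n - 1)" using u c ys len by (auto simp: y_def ys_def intro!: kform_kgen)
      show "kmap trunc_eval0 y \<in> krel R (n - 1)"
        using kgen_zero_coef[of R "map trunc_eval0 ys" "n - 1"] ys len es
        by (auto simp: y_def ys_def eval0_tm eval0_carrier)
      show "w i \<in> kform R n" for i
        using u c es len by (auto simp: w_def intro!: kform_minus kform_kgen)
      show "kmap (trunc_incl R) (kmap trunc_eval0 z) \<in> krel Rm n"
        using kgen_zero_slot[of R "trunc_eval0 (tm j c)" "[]" "map trunc_eval0 ys" n] ys len c es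
        by (intro krel_incl) (auto simp: z_def ys_def eval0_tm eval0_carrier)
      show "keq Rm n z (kd Rm y + W w)" using zz Ww by simp
    qed
  next
    case False
    have v0: "v \<in> krel Rm n"
      using kgen_zero_coef[of Rm "tm 0 (u \<otimes> c) # ys" n] False u c ys len
      by (simp add: v_def tm_big zero_Rm_add ys_def)
    show "good n z"
    proof (rule good_intro[where y=y and w="\<lambda>i. 0"])
      show "0 < n" using len by simp
      show "y \<in> kform Rm (n - 1)" using u c ys len by (auto simp: y_def ys_def intro!: kform_kgen)
      show "kmap trunc_eval0 y \<in> krel R (n - 1)"
        using kgen_zero_coef[of R "map trunc_eval0 ys" "n - 1"] ys len es
        by (auto simp: y_def ys_def eval0_tm eval0_carrier)
      show "(\<lambda>i. 0) i \<in> kform R n" for i by simp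
      show "kmap (trunc_incl R) (kmap trunc_eval0 z) \<in> krel Rm n"
        using kgen_zero_slot[of R "trunc_eval0 (tm j c)" "[]" "map trunc_eval0 ys" n] ys len c es
        by (intro krel_incl) (auto simp: z_def ys_def eval0_tm eval0_carrier)
      have "keq Rm n (kd Rm y + (- v)) (kd Rm y + 0)"
        by (intro keq_add keq_refl) (simp add: keq_krel krel_minus v0)
      then show "keq Rm n z (kd Rm y + W (\<lambda>i. 0))" using zz by (simp add: W_0 keq_trans)
    qed
  qed
qed

end


context trc begin

definition mt :: "(nat \<times> 'a) list \<Rightarrow> (nat \<Rightarrow> 'a) list" where
  "mt ps = map (\<lambda>p. tm (fst p) (snd p)) ps"
definition cnt :: "(nat \<times> 'a) list \<Rightarrow> nat" where
  "cnt ps = length (filter (\<lambda>p. 0 < fst p) ps)"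

lemma mt_append[simp]: "mt (xs @ ys) = mt xs @ mt ys" and mt_Cons[simp]: "mt (p # ps) = tm (fst p) (snd p) # mt ps"
  and mt_Nil[simp]: "mt [] = []" and length_mt[simp]: "length (mt ps) = length ps"
  by (auto simp: mt_def)
lemma mt_carrier: "set (map snd ps) \<subseteq> carrier R \<Longrightarrow> set (mt ps) \<subseteq> carrier Rm"
  by (auto simp: mt_def)

lemma cnt_split: "0 < cnt ps \<Longrightarrow> \<exists>ps1 k e ps2. ps = ps1 @ (Suc k, e) # ps2"
proof -
  assume "0 < cnt ps"
  then obtain p where "p \<in> set ps" "0 < fst p" unfolding cnt_def
    by (metis filter_False length_greater_0_conv)
  then obtain ps1 ps2 where "ps = ps1 @ p # ps2" by (meson split_list)
  moreover obtain k e where "p = (Suc k, e)" using \<open>0 < fst p\<close>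
    by (metis gr0_implies_Suc prod.collapse)
  ultimately show ?thesis by blast
qed

lemma cnt_less: "cnt (ps1 @ (0, e) # ps2) < cnt (ps1 @ (Suc k, e') # ps2)"
  by (simp add: cnt_def)

lemma cnt_zero: "cnt ps = 0 \<Longrightarrow> mt ps = map (tm 0) (map snd ps)"
  unfolding cnt_def mt_def by (induction ps) (auto split: if_splits)

lemma lemT0:
  assumes cr: "contains_rationals R"
  shows "set (map snd ps) \<subseteq> carrier R \<Longrightarrow> c \<in> carrier R \<Longrightarrow> length ps + 1 = n \<Longrightarrow>
    good n (kgen (tm j c) (TT # mt ps))"
proof (induction "cnt ps" arbitrary: ps j c rule: less_induct)
  case less
  show ?case
  proof (cases "cnt ps = 0")
    case True
    then show ?thesis using lemH[OF cr less.prems(2), of "map snd ps" n j] less.prems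
      by (simp add: cnt_zero)
  next
    case False
    then obtain ps1 k e ps2 where ps: "ps = ps1 @ (Suc k, e) # ps2" using cnt_split by blast
    have e: "e \<in> carrier R" and s1: "set (map snd ps1) \<subseteq> carrier R" and s2: "set (map snd ps2) \<subseteq> carrier R"
      using less.prems by (auto simp: ps)
    have c: "c \<in> carrier R" using less.prems by simp
    have lb: "keq Rm n (kgen (tm j c) ((TT # mt ps1) @ (tm (Suc k) \<one> \<otimes>\<^bsub>Rm\<^esub> tm 0 e) # mt ps2))
       (kgen (tm j c \<otimes>\<^bsub>Rm\<^esub> tm (Suc k) \<one>) ((TT # mt ps1) @ tm 0 e # mt ps2)
        + kgen (tm j c \<otimes>\<^bsub>Rm\<^esub> tm 0 e) ((TT # mt ps1) @ tm (Suc k) \<one> # mt ps2))"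
      using less.prems e c mt_carrier[OF s1] mt_carrier[OF s2] by (intro keq_leibniz) (auto simp: ps)
    have lb': "keq Rm n (kgen (tm j c) (TT # mt ps))
       (kgen (tm (j + Suc k) c) (TT # mt (ps1 @ (0, e) # ps2))
        + kgen (tm j (c \<otimes> e)) ((TT # mt ps1) @ tm (Suc k) \<one> # mt ps2))"
      using lb e c by (simp add: tm_mult ps)
    have g1: "good n (kgen (tm (j + Suc k) c) (TT # mt (ps1 @ (0, e) # ps2)))"
      using less.hyps[of "ps1 @ (0, e) # ps2"] cnt_less[of ps1 e ps2 k e] less.prems e c s1 s2
      by (simp add: ps)
    have d: "keq Rm n (kgen (tm j (c \<otimes> e)) ((TT # mt ps1) @ tm (Suc k) \<one> # mt ps2))
        (kgen (tm (j + k) ([Suc k] \<cdot> (c \<otimes> e))) ((TT # mt ps1) @ TT # mt ps2))"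
      using less.prems e c mt_carrier[OF s1] mt_carrier[OF s2] by (intro lemD) (auto simp: ps)
    have a: "kgen (tm (j + k) ([Suc k] \<cdot> (c \<otimes> e))) ([] @ TT # mt ps1 @ TT # mt ps2) \<in> krel Rm n"
      using less.prems e c mt_carrier[OF s1] mt_carrier[OF s2] by (intro krel.alt) (auto simp: ps)
    have g2: "good n (kgen (tm j (c \<otimes> e)) ((TT # mt ps1) @ tm (Suc k) \<one> # mt ps2))"
      using good_keq[OF d good_krel] a by simp
    show ?thesis using good_keq[OF lb' good_add[OF g1 g2]] .
  qed
qed


lemma good_intro0:
  assumes "\<And>i. w i \<in> kform R n" "keq Rm n z (kmap (trunc_incl R) (kmap trunc_eval0 z) + W w)"
  shows "good n z"
  unfolding good_def
  by (rule exI[of _ 0], rule exI[of _ w]) (use assms in \<open>simp add: keq_refl\<close>)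

lemma lemM0:
  assumes c: "c \<in> carrier R" and es: "set es \<subseteq> carrier R" and len: "length es = n"
  shows "good n (kgen (tm j c) (map (tm 0) es))"
proof -
  define z where "z = kgen (tm j c) (map (tm 0) es)"
  have ev: "kmap (trunc_incl R) (kmap trunc_eval0 z) = kgen (tm 0 (if j = 0 then c else \<zero>)) (map (tm 0) es)"
    using es by (simp add: z_def eval0_tm incl_tm_fun o_def)
  show ?thesis unfolding z_def[symmetric]
  proof (cases "j = 0")
    case True
    show "good n z"
    proof (rule good_intro0[where w="\<lambda>i. 0"])
      show "keq Rm n z (kmap (trunc_incl R) (kmap trunc_eval0 z) + W (\<lambda>i. 0))"
        unfolding ev using True by (simp add: z_def W_0 keq_refl)
    qed simp
  next
    case False
    show "good n z"
    proof (cases "j \<le> m")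
      case True
      define w where "w = (\<lambda>i. if i = j then kgen c es else 0)"
      have Ww: "W w = z" unfolding w_def using W_single[of j "kgen c es"] True False c
        by (simp add: z_def incl_tm_fun tpow_tm tm_mult)
      have k0: "kmap (trunc_incl R) (kmap trunc_eval0 z) \<in> krel Rm n"
        using kgen_zero_coef[of Rm "map (tm 0) es" n] False es len by (force simp add: ev tm_zero zero_Rm_add)
      show "good n z"
      proof (rule good_intro0[where w=w])
        show "w i \<in> kform R n" for i using c es len by (auto simp: w_def intro!: kform_kgen)
        have "keq Rm n (0 + W w) (kmap (trunc_incl R) (kmap trunc_eval0 z) + W w)"
          by (intro keq_add keq_refl keq_sym[OF keq_krel[OF k0]])
        then show "keq Rm n z (kmap (trunc_incl R) (kmap trunc_eval0 z) + W w)" by (simp add: Ww)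
      qed
    next
      case False
      then show "good n z"
        using kgen_zero_coef[of Rm "map (tm 0) es" n] es len
        by (intro good_krel) (force simp add: z_def tm_big zero_Rm_add)
    qed
  qed
qed

lemma lemM:
  assumes cr: "contains_rationals R"
  shows "set (map snd ps) \<subseteq> carrier R \<Longrightarrow> c \<in> carrier R \<Longrightarrow> length ps = n \<Longrightarrow>
    good n (kgen (tm j c) (mt ps))"
proof (induction "cnt ps" arbitrary: ps j c rule: less_induct)
  case less
  show ?case
  proof (cases "cnt ps = 0")
    case True
    then show ?thesis using lemM0[OF less.prems(2), of "map snd ps" n j] less.prems
      by (simp add: cnt_zero)
  next
    case False
    then obtain ps1 k e ps2 where ps: "ps = ps1 @ (Suc k, e) # ps2" using cnt_split by blast
    have e: "e \<in> carrier R" and s1: "set (map snd ps1) \<subseteq> carrier R" and s2: "set (map snd ps2) \<subseteq> carrier R"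
      using less.prems by (auto simp: ps)
    have c: "c \<in> carrier R" using less.prems by simp
    have lb: "keq Rm n (kgen (tm j c) (mt ps1 @ (tm (Suc k) \<one> \<otimes>\<^bsub>Rm\<^esub> tm 0 e) # mt ps2))
       (kgen (tm j c \<otimes>\<^bsub>Rm\<^esub> tm (Suc k) \<one>) (mt ps1 @ tm 0 e # mt ps2)
        + kgen (tm j c \<otimes>\<^bsub>Rm\<^esub> tm 0 e) (mt ps1 @ tm (Suc k) \<one> # mt ps2))"
      using less.prems e c mt_carrier[OF s1] mt_carrier[OF s2] by (intro keq_leibniz) (auto simp: ps)
    have lb': "keq Rm n (kgen (tm j c) (mt ps))
       (kgen (tm (j + Suc k) c) (mt (ps1 @ (0, e) # ps2))
        + kgen (tm j (c \<otimes> e)) (mt ps1 @ tm (Suc k) \<one> # mt ps2))"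
      using lb e c by (simp add: tm_mult ps)
    have g1: "good n (kgen (tm (j + Suc k) c) (mt (ps1 @ (0, e) # ps2)))"
      using less.hyps[of "ps1 @ (0, e) # ps2"] cnt_less[of ps1 e ps2 k e] less.prems e c s1 s2
      by (simp add: ps)
    have d: "keq Rm n (kgen (tm j (c \<otimes> e)) (mt ps1 @ tm (Suc k) \<one> # mt ps2))
        (kgen (tm (j + k) ([Suc k] \<cdot> (c \<otimes> e))) (mt ps1 @ TT # mt ps2))"
      using less.prems e c mt_carrier[OF s1] mt_carrier[OF s2] by (intro lemD) (auto simp: ps)
    have f: "keq Rm n (kgen (tm (j + k) ([Suc k] \<cdot> (c \<otimes> e))) (mt ps1 @ TT # mt ps2))
        (sg (length (mt ps1)) (kgen (tm (j + k) ([Suc k] \<cdot> (c \<otimes> e))) (TT # mt ps1 @ mt ps2)))"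
      using less.prems e c mt_carrier[OF s1] mt_carrier[OF s2]
      by (intro kgen_front add_Rm_closed) (auto simp: ps)
    have g3: "good n (kgen (tm (j + k) ([Suc k] \<cdot> (c \<otimes> e))) (TT # mt ps1 @ mt ps2))"
      using lemT0[OF cr, of "ps1 @ ps2" "[Suc k] \<cdot> (c \<otimes> e)" n "j + k"] less.prems e c s1 s2
      by (simp add: ps)
    have g2: "good n (kgen (tm j (c \<otimes> e)) (mt ps1 @ tm (Suc k) \<one> # mt ps2))"
      using good_keq[OF d good_keq[OF f good_sg[OF g3]]] by simp
    show ?thesis using good_keq[OF lb' good_add[OF g1 g2]] .
  qed
qed

end


context trc begin

lemma lemA:
  assumes cr: "contains_rationals R"
  shows "set ys \<subseteq> carrier Rm \<Longrightarrow> set (map snd ps) \<subseteq> carrier R \<Longrightarrow> c \<in> carrier R \<Longrightarrow>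
    length ps + length ys = n \<Longrightarrow> good n (kgen (tm j c) (mt ps @ ys))"
proof (induction ys arbitrary: ps)
  case Nil
  then show ?case using lemM[OF cr, of ps c n j] by simp
next
  case (Cons y ys)
  have y: "y \<in> carrier Rm" using Cons.prems by simp
  have yk: "y k \<in> carrier R" for k using y by (simp add: carrier_Rm)
  have d: "keq Rm n (kgen (tm j c) (mt ps @ y # ys)) (\<Sum>k<Suc m. kgen (tm j c) (mt ps @ tm k (y k) # ys))"
    using Cons.prems mt_carrier[of ps] by (intro decomp_slot) auto
  have "good n (\<Sum>k<Suc m. kgen (tm j c) (mt ps @ tm k (y k) # ys))"
  proof (rule good_sum)
    fix k
    show "good n (kgen (tm j c) (mt ps @ tm k (y k) # ys))"
      using Cons.IH[of "ps @ [(k, y k)]"] Cons.prems yk by simp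
  qed simp
  then show ?case using good_keq[OF d] by simp
qed

lemma lemGen:
  assumes cr: "contains_rationals R" and a: "a \<in> carrier Rm" and as: "set as \<subseteq> carrier Rm" and len: "length as = n"
  shows "good n (kgen a as)"
proof -
  have d: "keq Rm n (kgen a as) (\<Sum>k<Suc m. kgen (tm k (a k)) as)"
    using assms by (intro decomp_coef) auto
  have "good n (\<Sum>k<Suc m. kgen (tm k (a k)) as)"
  proof (rule good_sum)
    fix k
    show "good n (kgen (tm k (a k)) as)"
      using lemA[OF cr, of as "[]" "a k" n k] a as len by (simp add: carrier_Rm)
  qed simp
  then show ?thesis using good_keq[OF d] by simp
qed

lemma lemForm:
  assumes cr: "contains_rationals R" and x: "x \<in> kform Rm n"
  shows "good n x"
proof -
  have "Poly_Mapping.keys x \<subseteq> {k. fst k \<in> carrier Rm \<and> set (snd k) \<subseteq> carrier Rm \<and> length (snd k) = n}"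
    using x by (simp add: kform_iff)
  then show ?thesis
  proof (induction x rule: frag_induction)
    case zero
    then show ?case by (rule good_0)
  next
    case (one k)
    then show ?case using lemGen[OF cr, of "fst k" "snd k" n] by (simp add: kgen_def)
  next
    case (diff a b)
    then show ?case by (rule good_diff)
  qed
qed

end

theorem lemma8p3:
  fixes R :: "('a, 'b) ring_scheme" and m n :: nat and x :: "(nat \<Rightarrow> 'a) kformal"
  assumes "cring R" and "semilocal R" and "contains_rationals R" and "1 \<le> m"
    and "x \<in> kform (trunc_ring R m) n"
    and "keq R n (kmap trunc_eval0 x) 0"
  shows "\<exists>y w. y \<in> kform (trunc_ring R m) (n - 1)
      \<and> (n = 0 \<longrightarrow> y = 0)
      \<and> keq R (n - 1) (kmap trunc_eval0 y) 0
      \<and> (\<forall>i. w i \<in> kform R n)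
      \<and> keq (trunc_ring R m) n x
           (kd (trunc_ring R m) y
            + (\<Sum>i\<in>{1..m}. kscale (trunc_ring R m) (trunc_tpow R i) (kmap (trunc_incl R) (w i))))"
proof -
  interpret trc R m by (rule trc.intro[OF assms(1)])
  have "good n x" by (rule lemForm[OF assms(3,5)])
  then obtain y w where h: "y \<in> kform Rm (n - 1)" "n = 0 \<longrightarrow> y = 0" "keq R (n - 1) (kmap trunc_eval0 y) 0"
    "\<forall>i. w i \<in> kform R n" "keq Rm n x (kmap (trunc_incl R) (kmap trunc_eval0 x) + kd Rm y + W w)"
    unfolding good_def by blast
  have k0: "kmap (trunc_incl R) (kmap trunc_eval0 x) \<in> krel Rm n"
    using assms(6) by (intro krel_incl) (simp add: keq_krel_iff)
  have "keq Rm n (kmap (trunc_incl R) (kmap trunc_eval0 x) + (kd Rm y + W w)) (0 + (kd Rm y + W w))"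
    by (intro keq_add keq_refl keq_krel k0)
  then have "keq Rm n x (kd Rm y + W w)"
    using h(5) keq_trans by (fastforce simp: add.assoc)
  then show ?thesis using h unfolding W_def by blast
qed


end
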